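(* An even nonnegative integer $n$ satisfies $v(n)=1$ if and only if $n\in\{10,12\}$.
   Context: A hyperbinary expansion of a nonnegative integer $n$ is a word $x_0\cdots x_k$ over $\{0,1,2\}$ with $x_0\ne0$ and $\sum_i x_i2^{k-i}=n$. The empty word is the unique hyperbinary expansion of $0$. Write $\mathcal H(n)$ for the set of such expansions and $b(n)=|\mathcal H(n)|$. $A(n)$ is the directed graph on $\mathcal H(n)$ with an arc from $\mathbf x02\mathbf y$ to $\mathbf x10\mathbf y$, from $2\mathbf y$ to $10\mathbf y$, and from $\mathbf x12\mathbf y$ to $\mathbf x20\mathbf y$, for arbitrary words $\mathbf x,\mathbf y$ whenever both endpoints lie in $\mathcal H(n)$. $A(n)$ is connected. $v(n)$ denotes the cyclomatic number of $A(n)$: (number of arcs) $-\,b(n)+1$. *)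

theory Defs
  imports Main
begin

text \<open>Value of a digit word x_0 ... x_k (most significant digit first):
  sum_i x_i 2^(k-i).\<close>
definition word_val :: "nat list \<Rightarrow> nat" where
  "word_val xs = (\<Sum>i<length xs. xs ! i * 2 ^ (length xs - 1 - i))"

text \<open>Hyperbinary expansions of n: words over {0,1,2} with nonzero first letter
  (the empty word is allowed and represents 0).\<close>
definition hyp :: "nat \<Rightarrow> nat list set" where
  "hyp n = {xs. set xs \<subseteq> {0,1,2} \<and> (xs \<noteq> [] \<longrightarrow> hd xs \<noteq> 0) \<and> word_val xs = n}"

definition b :: "nat \<Rightarrow> nat" where
  "b n = card (hyp n)"

definition arcs :: "nat \<Rightarrow> (nat list \<times> nat list) set" where
  "arcs n = {(u, w). u \<in> hyp n \<and> w \<in> hyp n \<and>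
     ((\<exists>x y. u = x @ [0,2] @ y \<and> w = x @ [1,0] @ y) \<or>
      (\<exists>y. u = 2 # y \<and> w = [1,0] @ y) \<or>
      (\<exists>x y. u = x @ [1,2] @ y \<and> w = x @ [2,0] @ y))}"

definition v :: "nat \<Rightarrow> int" where
  "v n = int (card (arcs n)) - int (b n) + 1"

end

theory Submission
  imports Defs
begin


lemma wv_nil[simp]: "word_val [] = 0"
  by (simp add: word_val_def)

lemma wv_snoc[simp]: "word_val (xs @ [d]) = 2 * word_val xs + d"
proof -
  have "word_val (xs @ [d]) = (\<Sum>i<Suc (length xs). (xs@[d]) ! i * 2 ^ (length xs - i))"
    by (simp add: word_val_def)
  also have "\<dots> = (\<Sum>i<length xs. (xs@[d]) ! i * 2 ^ (length xs - i)) + d"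
    by (simp add: nth_append)
  also have "(\<Sum>i<length xs. (xs@[d]) ! i * 2 ^ (length xs - i)) = (\<Sum>i<length xs. 2 * (xs ! i * 2 ^ (length xs - 1 - i)))"
  proof (rule sum.cong)
    fix i assume "i \<in> {..<length xs}"
    then have "length xs - i = Suc (length xs - 1 - i)" by auto
    then show "(xs@[d]) ! i * 2 ^ (length xs - i) = 2 * (xs ! i * 2 ^ (length xs - 1 - i))"
      using \<open>i \<in> _\<close> by (simp add: nth_append)
  qed simp
  also have "\<dots> = 2 * word_val xs" by (simp add: word_val_def sum_distrib_left)
  finally show ?thesis by simp
qed

lemma wv_single[simp]: "word_val [d] = d"
  using wv_snoc[of "[]" d] by simp

lemma wv_pos: "xs \<noteq> [] \<Longrightarrow> hd xs \<noteq> 0 \<Longrightarrow> word_val xs > 0"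
proof (induction xs rule: rev_induct)
  case Nil then show ?case by simp
next
  case (snoc d ys) then show ?case by (cases "ys = []") auto
qed

lemma set012: "set xs \<subseteq> {0,1,2} \<longleftrightarrow> (\<forall>d\<in>set xs. d \<le> (2::nat))"
  by auto

lemma hyp_snoc: "(xs@[d]) \<in> hyp n \<longleftrightarrow> d \<le> 2 \<and> 2 * word_val xs + d = n \<and> (xs = [] \<longrightarrow> d \<noteq> 0) \<and> xs \<in> hyp (word_val xs)"
  unfolding hyp_def set012 by (auto simp: hd_append)

lemma hyp_nonempty: "xs \<in> hyp n \<Longrightarrow> n > 0 \<Longrightarrow> xs \<noteq> []"
  unfolding hyp_def by auto

lemma hyp_zero: "hyp 0 = {[]}"
  unfolding hyp_def using wv_pos by fastforce

lemma hyp_odd: "hyp (2*m+1) = (\<lambda>x. x@[1]) ` hyp m"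
proof
  show "hyp (2*m+1) \<subseteq> (\<lambda>x. x@[1]) ` hyp m"
  proof
    fix xs assume xs: "xs \<in> hyp (2*m+1)"
    then have "xs \<noteq> []" using hyp_nonempty[OF xs] by simp
    then obtain ys d where e: "xs = ys@[d]" by (metis rev_exhaust)
    with xs have "d \<le> 2" "2 * word_val ys + d = 2*m+1" "ys \<in> hyp (word_val ys)"
      by (simp_all add: hyp_snoc)
    then have "d = 1" "word_val ys = m" by presburger+
    then show "xs \<in> (\<lambda>x. x@[1]) ` hyp m" using e \<open>ys \<in> hyp (word_val ys)\<close> by auto
  qed
next
  have "x@[1] \<in> hyp (2*m+1)" if "x \<in> hyp m" for x
  proof -
    have "word_val x = m" using that by (simp add: hyp_def)
    then show ?thesis using that by (simp add: hyp_snoc)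
  qed
  then show "(\<lambda>x. x@[1]) ` hyp m \<subseteq> hyp (2*m+1)" by blast
qed

lemma hyp_even: "hyp (2*m+2) = (\<lambda>x. x@[0]) ` hyp (m+1) \<union> (\<lambda>x. x@[2]) ` hyp m"
proof
  show "hyp (2*m+2) \<subseteq> (\<lambda>x. x@[0]) ` hyp (m+1) \<union> (\<lambda>x. x@[2]) ` hyp m"
  proof
    fix xs assume xs: "xs \<in> hyp (2*m+2)"
    then have "xs \<noteq> []" using hyp_nonempty[OF xs] by simp
    then obtain ys d where e: "xs = ys@[d]" by (metis rev_exhaust)
    with xs have "d \<le> 2" "2 * word_val ys + d = 2*m+2" "ys \<in> hyp (word_val ys)"
      by (simp_all add: hyp_snoc)
    then have "(d = 0 \<and> word_val ys = m+1) \<or> (d = 2 \<and> word_val ys = m)" by presburger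
    then show "xs \<in> (\<lambda>x. x@[0]) ` hyp (m+1) \<union> (\<lambda>x. x@[2]) ` hyp m"
      using e \<open>ys \<in> hyp (word_val ys)\<close> by auto
  qed
next
  have "x@[0] \<in> hyp (2*m+2)" if "x \<in> hyp (m+1)" for x
  proof -
    have "x \<noteq> []" using hyp_nonempty[OF that] by simp
    moreover have "word_val x = m+1" using that by (simp add: hyp_def)
    ultimately show ?thesis using that by (simp add: hyp_snoc)
  qed
  moreover have "x@[2] \<in> hyp (2*m+2)" if "x \<in> hyp m" for x
  proof -
    have "word_val x = m" using that by (simp add: hyp_def)
    then show ?thesis using that by (simp add: hyp_snoc)
  qed
  ultimately show "(\<lambda>x. x@[0]) ` hyp (m+1) \<union> (\<lambda>x. x@[2]) ` hyp m \<subseteq> hyp (2*m+2)" by blast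
qed

lemma finite_hyp: "finite (hyp n)"
proof (induction n rule: less_induct)
  case (less n)
  show ?case
  proof (cases n)
    case 0 then show ?thesis by (simp add: hyp_zero)
  next
    case (Suc k)
    show ?thesis
    proof (cases "even n")
      case True
      then obtain m where "k = 2*m+1" using Suc by (metis even_Suc oddE)
      then have "n = 2*m+2" using Suc by simp
      then show ?thesis using less.IH[of m] less.IH[of "m+1"] hyp_even[of m] by simp
    next
      case False
      then obtain m where "n = 2*m+1" by (metis oddE)
      then show ?thesis using less.IH[of m] hyp_odd[of m] by simp
    qed
  qed
qed

lemma b_zero: "b 0 = 1" by (simp add: b_def hyp_zero)

lemma b_odd_orig: "b (2*m+1) = b m"
  unfolding b_def hyp_odd by (rule card_image) (simp add: inj_on_def)

lemma b_even_orig: "b (2*m+2) = b (m+1) + b m"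
  unfolding b_def hyp_even
  by (subst card_Un_disjoint) (auto simp: finite_hyp card_image inj_on_def)



lemma win2: "(\<exists>x y. u@[a] = x@[p1,p2]@y \<and> w@[c] = x@[q1,q2]@y) \<longleftrightarrow>
   ((\<exists>x y. u = x@[p1,p2]@y \<and> w = x@[q1,q2]@y) \<and> a = c) \<or> (a = p2 \<and> c = q2 \<and> (\<exists>x. u = x@[p1] \<and> w = x@[q1]))"
proof
  assume "\<exists>x y. u@[a] = x@[p1,p2]@y \<and> w@[c] = x@[q1,q2]@y"
  then obtain x y where h: "u@[a] = x@[p1,p2]@y" "w@[c] = x@[q1,q2]@y" by blast
  show "((\<exists>x y. u = x@[p1,p2]@y \<and> w = x@[q1,q2]@y) \<and> a = c) \<or> (a = p2 \<and> c = q2 \<and> (\<exists>x. u = x@[p1] \<and> w = x@[q1]))"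
  proof (cases y rule: rev_exhaust)
    case Nil
    then have "u@[a] = (x@[p1])@[p2]" "w@[c] = (x@[q1])@[q2]" using h by simp_all
    then show ?thesis by (simp only: append1_eq_conv) blast
  next
    case (snoc y' z)
    then have "u@[a] = (x@[p1,p2]@y')@[z]" "w@[c] = (x@[q1,q2]@y')@[z]" using h by simp_all
    then show ?thesis by (simp only: append1_eq_conv) blast
  qed
next
  assume "((\<exists>x y. u = x@[p1,p2]@y \<and> w = x@[q1,q2]@y) \<and> a = c) \<or> (a = p2 \<and> c = q2 \<and> (\<exists>x. u = x@[p1] \<and> w = x@[q1]))"
  then show "\<exists>x y. u@[a] = x@[p1,p2]@y \<and> w@[c] = x@[q1,q2]@y"
  proof
    assume "(\<exists>x y. u = x@[p1,p2]@y \<and> w = x@[q1,q2]@y) \<and> a = c"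
    then obtain x y where "u = x@[p1,p2]@y" "w = x@[q1,q2]@y" "a = c" by blast
    then show ?thesis by (intro exI[of _ x] exI[of _ "y@[a]"]) simp
  next
    assume "a = p2 \<and> c = q2 \<and> (\<exists>x. u = x@[p1] \<and> w = x@[q1])"
    then obtain x where "u = x@[p1]" "w = x@[q1]" "a = p2" "c = q2" by blast
    then show ?thesis by (intro exI[of _ x] exI[of _ "[]"]) simp
  qed
qed

lemma win1: "(\<exists>y. u@[a] = 2#y \<and> w@[c] = [1,0]@y) \<longleftrightarrow>
   ((\<exists>y. u = 2#y \<and> w = [1,0]@y) \<and> a = c) \<or> (a = 2 \<and> c = 0 \<and> u = [] \<and> w = [1])"
proof
  assume "\<exists>y. u@[a] = 2#y \<and> w@[c] = [1,0]@y"
  then obtain y where h: "u@[a] = 2#y" "w@[c] = [1,0]@y" by blast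
  show "((\<exists>y. u = 2#y \<and> w = [1,0]@y) \<and> a = c) \<or> (a = 2 \<and> c = 0 \<and> u = [] \<and> w = [1])"
  proof (cases y rule: rev_exhaust)
    case Nil
    then have "u@[a] = []@[2]" "w@[c] = [1]@[0]" using h by simp_all
    then show ?thesis by (simp only: append1_eq_conv) blast
  next
    case (snoc y' z)
    then have "u@[a] = (2#y')@[z]" "w@[c] = ([1,0]@y')@[z]" using h by simp_all
    then show ?thesis by (simp only: append1_eq_conv) blast
  qed
next
  assume "((\<exists>y. u = 2#y \<and> w = [1,0]@y) \<and> a = c) \<or> (a = 2 \<and> c = 0 \<and> u = [] \<and> w = [1])"
  then show "\<exists>y. u@[a] = 2#y \<and> w@[c] = [1,0]@y" by auto
qed

definition R :: "nat list \<Rightarrow> nat list \<Rightarrow> bool" where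
  "R u w \<longleftrightarrow> ((\<exists>x y. u = x @ [0,2] @ y \<and> w = x @ [1,0] @ y) \<or>
      (\<exists>y. u = 2 # y \<and> w = [1,0] @ y) \<or>
      (\<exists>x y. u = x @ [1,2] @ y \<and> w = x @ [2,0] @ y))"

definition E :: "nat list \<Rightarrow> nat list \<Rightarrow> bool" where
  "E u w \<longleftrightarrow> (\<exists>x. u = x@[0] \<and> w = x@[1]) \<or> (\<exists>x. u = x@[1] \<and> w = x@[2]) \<or> (u = [] \<and> w = [1])"

lemma arcs_R: "arcs n = {(u, w). u \<in> hyp n \<and> w \<in> hyp n \<and> R u w}"
  unfolding arcs_def R_def by simp

lemma R_snoc: "R (u@[a]) (w@[c]) \<longleftrightarrow> (R u w \<and> a = c) \<or> (a = 2 \<and> c = 0 \<and> E u w)"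
  unfolding R_def E_def win1 win2 by blast



definition T :: "nat \<Rightarrow> (nat list \<times> nat list) set" where
  "T m = {(u@[2], w@[0]) | u w. u \<in> hyp m \<and> w \<in> hyp (m+1) \<and> E u w}"

lemma hyp_odd_mem: "p \<in> hyp (Suc (2*m)) \<longleftrightarrow> (\<exists>u. p = u@[1] \<and> u \<in> hyp m)"
  using hyp_odd[of m] by auto

lemma hyp_even_mem: "p \<in> hyp (Suc (Suc (2*m))) \<longleftrightarrow> (\<exists>u. p = u@[0] \<and> u \<in> hyp (Suc m)) \<or> (\<exists>u. p = u@[2] \<and> u \<in> hyp m)"
  using hyp_even[of m] by auto

lemma arcs_odd: "arcs (2*m+1) = map_prod (\<lambda>x. x@[1]) (\<lambda>x. x@[1]) ` arcs m"
proof (rule set_eqI)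
  fix pq :: "nat list \<times> nat list"
  obtain p q where pq: "pq = (p,q)" by fastforce
  show "pq \<in> arcs (2*m+1) \<longleftrightarrow> pq \<in> map_prod (\<lambda>x. x@[1]) (\<lambda>x. x@[1]) ` arcs m"
    unfolding pq arcs_R by (auto simp: hyp_odd_mem R_snoc)
qed

lemma arcs_even: "arcs (2*m+2) = map_prod (\<lambda>x. x@[0]) (\<lambda>x. x@[0]) ` arcs (m+1)
   \<union> map_prod (\<lambda>x. x@[2]) (\<lambda>x. x@[2]) ` arcs m \<union> T m"
proof (rule set_eqI)
  fix pq :: "nat list \<times> nat list"
  obtain p q where pq: "pq = (p,q)" by fastforce
  show "pq \<in> arcs (2*m+2) \<longleftrightarrow> pq \<in> map_prod (\<lambda>x. x@[0]) (\<lambda>x. x@[0]) ` arcs (m+1)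
   \<union> map_prod (\<lambda>x. x@[2]) (\<lambda>x. x@[2]) ` arcs m \<union> T m"
    unfolding pq arcs_R T_def by (auto simp: hyp_even_mem R_snoc)
qed

lemma E_0: "E (x@[0]) w \<longleftrightarrow> w = x@[1]" by (auto simp: E_def)
lemma E_1: "E (x@[Suc 0]) w \<longleftrightarrow> w = x@[2]" by (auto simp: E_def)
lemma E_2: "\<not> E (x@[2]) w" by (auto simp: E_def)
lemma E_nil: "E [] w \<longleftrightarrow> w = [1]" by (auto simp: E_def)

lemma T_0: "T 0 = {([2],[1,0])}"
proof -
  have "hyp 1 = {[1]}" using hyp_odd[of 0] by (simp add: hyp_zero)
  then show ?thesis by (auto simp: T_def hyp_zero E_nil)
qed

lemma T_odd: "T (2*k+1) = (\<lambda>x. (x@[1,2], x@[2,0])) ` hyp k"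
proof -
  have "T (2*k+1) = {(u@[2], w@[0]) | u w. u \<in> hyp (Suc (2*k)) \<and> w \<in> hyp (Suc (Suc (2*k))) \<and> E u w}"
    by (simp add: T_def)
  also have "\<dots> = (\<lambda>x. (x@[1,2], x@[2,0])) ` hyp k"
  proof
    show "{(u@[2], w@[0]) | u w. u \<in> hyp (Suc (2*k)) \<and> w \<in> hyp (Suc (Suc (2*k))) \<and> E u w} \<subseteq> (\<lambda>x. (x@[1,2], x@[2,0])) ` hyp k"
    proof
      fix pq assume "pq \<in> {(u@[2], w@[0]) | u w. u \<in> hyp (Suc (2*k)) \<and> w \<in> hyp (Suc (Suc (2*k))) \<and> E u w}"
      then obtain u w where pq: "pq = (u@[2], w@[0])" and u: "u \<in> hyp (Suc (2*k))" and E: "E u w" by blast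
      from u obtain x where x: "u = x@[1]" "x \<in> hyp k" by (auto simp: hyp_odd_mem)
      with E have "w = x@[2]" by (simp add: E_1)
      with pq x show "pq \<in> (\<lambda>x. (x@[1,2], x@[2,0])) ` hyp k" by auto
    qed
  next
    show "(\<lambda>x. (x@[1,2], x@[2,0])) ` hyp k \<subseteq> {(u@[2], w@[0]) | u w. u \<in> hyp (Suc (2*k)) \<and> w \<in> hyp (Suc (Suc (2*k))) \<and> E u w}"
    proof
      fix pq assume "pq \<in> (\<lambda>x. (x@[1,2], x@[2,0])) ` hyp k"
      then obtain x where pq: "pq = (x@[1,2], x@[2,0])" and x: "x \<in> hyp k" by blast
      have "x@[1] \<in> hyp (Suc (2*k))" using x hyp_odd_mem by blast
      moreover have "x@[2] \<in> hyp (Suc (Suc (2*k)))" using x hyp_even_mem by blast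
      moreover have "E (x@[1]) (x@[2])" by (simp add: E_1)
      moreover have "pq = ((x@[1])@[2], (x@[2])@[0])" using pq by simp
      ultimately show "pq \<in> {(u@[2], w@[0]) | u w. u \<in> hyp (Suc (2*k)) \<and> w \<in> hyp (Suc (Suc (2*k))) \<and> E u w}" by blast
    qed
  qed
  finally show ?thesis .
qed

lemma T_even: "T (2*k+2) = (\<lambda>x. (x@[0,2], x@[1,0])) ` hyp (k+1)"
proof -
  have "T (2*k+2) = {(u@[2], w@[0]) | u w. u \<in> hyp (Suc (Suc (2*k))) \<and> w \<in> hyp (Suc (2*(k+1))) \<and> E u w}"
    by (simp add: T_def)
  also have "\<dots> = (\<lambda>x. (x@[0,2], x@[1,0])) ` hyp (k+1)"
  proof
    show "{(u@[2], w@[0]) | u w. u \<in> hyp (Suc (Suc (2*k))) \<and> w \<in> hyp (Suc (2*(k+1))) \<and> E u w} \<subseteq> (\<lambda>x. (x@[0,2], x@[1,0])) ` hyp (k+1)"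
    proof
      fix pq assume "pq \<in> {(u@[2], w@[0]) | u w. u \<in> hyp (Suc (Suc (2*k))) \<and> w \<in> hyp (Suc (2*(k+1))) \<and> E u w}"
      then obtain u w where pq: "pq = (u@[2], w@[0])" and u: "u \<in> hyp (Suc (Suc (2*k)))" and E: "E u w" by blast
      from u have "(\<exists>x. u = x@[0] \<and> x \<in> hyp (Suc k)) \<or> (\<exists>x. u = x@[2] \<and> x \<in> hyp k)" by (simp only: hyp_even_mem)
      moreover have "\<not> (\<exists>x. u = x@[2] \<and> x \<in> hyp k)" using E E_2 by blast
      ultimately obtain x where x: "u = x@[0]" "x \<in> hyp (Suc k)" by blast
      with E have "w = x@[1]" by (simp add: E_0)
      with pq x show "pq \<in> (\<lambda>x. (x@[0,2], x@[1,0])) ` hyp (k+1)" by auto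
    qed
  next
    show "(\<lambda>x. (x@[0,2], x@[1,0])) ` hyp (k+1) \<subseteq> {(u@[2], w@[0]) | u w. u \<in> hyp (Suc (Suc (2*k))) \<and> w \<in> hyp (Suc (2*(k+1))) \<and> E u w}"
    proof
      fix pq assume "pq \<in> (\<lambda>x. (x@[0,2], x@[1,0])) ` hyp (k+1)"
      then obtain x where pq: "pq = (x@[0,2], x@[1,0])" and x: "x \<in> hyp (Suc k)" by auto
      have "x@[0] \<in> hyp (Suc (Suc (2*k)))" using x hyp_even_mem by blast
      moreover have "x@[1] \<in> hyp (Suc (2*(k+1)))" using x hyp_odd_mem[of _ "k+1"] by simp
      moreover have "E (x@[0]) (x@[1])" by (simp add: E_0)
      moreover have "pq = ((x@[0])@[2], (x@[1])@[0])" using pq by simp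
      ultimately show "pq \<in> {(u@[2], w@[0]) | u w. u \<in> hyp (Suc (Suc (2*k))) \<and> w \<in> hyp (Suc (2*(k+1))) \<and> E u w}" by blast
    qed
  qed
  finally show ?thesis .
qed

lemma card_T: "card (T m) = b (m div 2)"
proof -
  consider "m = 0" | k where "m = 2*k+1" | k where "m = 2*k+2"
  proof -
    assume h0: "m = 0 \<Longrightarrow> thesis" and h1: "\<And>k. m = 2*k+1 \<Longrightarrow> thesis" and h2: "\<And>k. m = 2*k+2 \<Longrightarrow> thesis"
    show thesis
    proof (cases "even m")
      case True
      then obtain j where j: "m = 2*j" by blast
      show thesis
      proof (cases j)
        case 0 then show thesis using h0 j by simp
      next
        case (Suc i) then show thesis using h2[of i] j by simp
      qed
    next
      case False
      then obtain k where "m = 2*k+1" by (metis oddE)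
      then show thesis using h1 by blast
    qed
  qed
  then show ?thesis
  proof cases
    case 1 then show ?thesis by (simp add: T_0 b_zero)
  next
    case 2
    have "card (T m) = card (hyp k)" unfolding 2 T_odd
      by (rule card_image) (auto simp: inj_on_def)
    then show ?thesis using 2 by (simp add: b_def)
  next
    case 3
    have "card (T m) = card (hyp (k+1))" unfolding 3 T_even
      by (rule card_image) (auto simp: inj_on_def)
    then show ?thesis using 3 by (simp add: b_def)
  qed
qed

definition e :: "nat \<Rightarrow> nat" where "e n = card (arcs n)"

lemma finite_arcs: "finite (arcs n)"
proof -
  have "arcs n \<subseteq> hyp n \<times> hyp n" by (auto simp: arcs_def)
  then show ?thesis using finite_hyp by (meson finite_SigmaI rev_finite_subset)
qed

lemma finite_T: "finite (T m)"
proof -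
  have "T m \<subseteq> (\<lambda>x. x@[2]) ` hyp m \<times> (\<lambda>x. x@[0]) ` hyp (m+1)" by (auto simp: T_def)
  then show ?thesis using finite_hyp by (meson finite_SigmaI finite_imageI rev_finite_subset)
qed

lemma e_zero: "e 0 = 0"
proof -
  have "arcs 0 = {}" by (auto simp: arcs_R hyp_zero R_def)
  then show ?thesis by (simp add: e_def)
qed

lemma e_odd: "e (2*m+1) = e m"
  unfolding e_def arcs_odd by (rule card_image) (auto simp: inj_on_def)

lemma e_even: "e (2*m+2) = e (m+1) + e m + b (m div 2)"
proof -
  let ?A = "map_prod (\<lambda>x. x@[0]) (\<lambda>x. x@[0]) ` arcs (m+1)"
  let ?B = "map_prod (\<lambda>x. x@[2]) (\<lambda>x. x@[2]) ` arcs m"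
  have cA: "card ?A = e (m+1)" unfolding e_def by (rule card_image) (auto simp: inj_on_def)
  have cB: "card ?B = e m" unfolding e_def by (rule card_image) (auto simp: inj_on_def)
  have fA: "finite ?A" "finite ?B" using finite_arcs by auto
  have d1: "?A \<inter> ?B = {}" by auto
  have d2: "(?A \<union> ?B) \<inter> T m = {}" by (auto simp: T_def)
  have "e (2*m+2) = card (?A \<union> ?B \<union> T m)" unfolding e_def arcs_even ..
  also have "\<dots> = card (?A \<union> ?B) + card (T m)"
    by (rule card_Un_disjoint) (use fA finite_T d2 in auto)
  also have "card (?A \<union> ?B) = card ?A + card ?B"
    by (rule card_Un_disjoint) (use fA d1 in auto)
  finally show ?thesis using cA cB card_T by simp
qed



lemma v_e: "v n = int (e n) - int (b n) + 1" by (simp add: v_def e_def)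

lemma b_odd_s: "b (Suc (2*m)) = b m" using b_odd_orig by simp
lemma b_even_s: "b (Suc (Suc (2*m))) = b (Suc m) + b m" using b_even_orig by simp
lemma e_odd_s: "e (Suc (2*m)) = e m" using e_odd by simp
lemma e_even_s: "e (Suc (Suc (2*m))) = e (Suc m) + e m + b (m div 2)" using e_even by simp
lemmas rec_s = b_odd_s b_even_s e_odd_s e_even_s

lemma v_zero: "v 0 = 0" by (simp add: v_e e_zero b_zero)
lemma v_odd0: "v (2*m+1) = v m" by (simp add: v_e rec_s)
lemma v_even0: "v (2*m+2) = v (m+1) + v m + int (b (m div 2)) - 1"
  by (simp add: v_e rec_s)
lemma v_odd_s: "v (Suc (2*m)) = v m" using v_odd0 by simp
lemma v_even_s: "v (Suc (Suc (2*m))) = v (Suc m) + v m + int (b (m div 2)) - 1" using v_even0 by simp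
lemmas b_odd = b_odd_orig b_odd_s
lemmas b_even = b_even_orig b_even_s
lemmas v_odd = v_odd0 v_odd_s
lemmas v_even = v_even0 v_even_s

lemma nat_cases3:
  fixes n :: nat
  obtains "n = 0" | m where "n = 2*m+1" | m where "n = 2*m+2"
proof (cases "even n")
  case True
  then obtain j where j: "n = 2*j" by blast
  show thesis
  proof (cases j)
    case 0 then show thesis using that j by simp
  next
    case (Suc i) then show thesis using that(3)[of i] j by simp
  qed
next
  case False
  then obtain k where "n = 2*k+1" by (metis oddE)
  then show thesis using that by blast
qed

lemma b_pos: "b n \<ge> 1"
proof (induction n rule: less_induct)
  case (less n)
  show ?case
  proof (cases n rule: nat_cases3)
    case 1 then show ?thesis by (simp add: b_zero)
  next
    case (2 m) then show ?thesis using less[of m] by (simp add: b_odd)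
  next
    case (3 m) then show ?thesis using less[of m] by (simp add: b_even)
  qed
qed

lemma v_nonneg: "v n \<ge> 0"
proof (induction n rule: less_induct)
  case (less n)
  show ?case
  proof (cases n rule: nat_cases3)
    case 1 then show ?thesis by (simp add: v_zero)
  next
    case (2 m) then show ?thesis using less[of m] by (simp add: v_odd)
  next
    case (3 m) then show ?thesis using less[of m] less[of "m+1"] b_pos[of "m div 2"] by (simp add: v_even)
  qed
qed

definition pw :: "nat \<Rightarrow> bool" where "pw q \<longleftrightarrow> (\<exists>j. q+1 = 2^j)"
definition tw :: "nat \<Rightarrow> bool" where "tw q \<longleftrightarrow> (\<exists>j. q+1 = 3*2^j)"

lemma b1_pw: "b k = 1 \<Longrightarrow> pw k"
proof (induction k rule: less_induct)
  case (less k)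
  show ?case
  proof (cases k rule: nat_cases3)
    case 1 then show ?thesis by (simp add: pw_def exI[of _ 0])
  next
    case (2 m)
    then have "pw m" using less by (simp add: b_odd)
    then obtain j where "m+1 = 2^j" by (auto simp: pw_def)
    then have "k+1 = 2^(Suc j)" using 2 by simp
    then show ?thesis unfolding pw_def by blast
  next
    case (3 m) then show ?thesis using less.prems b_pos[of m] b_pos[of "m+1"] by (simp add: b_even)
  qed
qed

lemma b2_pw_tw: "b k \<le> 2 \<Longrightarrow> pw k \<or> tw k"
proof (induction k rule: less_induct)
  case (less k)
  show ?case
  proof (cases k rule: nat_cases3)
    case 1 then show ?thesis by (simp add: pw_def exI[of _ 0])
  next
    case (2 m)
    then have "pw m \<or> tw m" using less by (simp add: b_odd)
    then show ?thesis
    proof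
      assume "pw m"
      then obtain j where "m+1 = 2^j" by (auto simp: pw_def)
      then have "k+1 = 2^(Suc j)" using 2 by simp
      then show ?thesis unfolding pw_def by blast
    next
      assume "tw m"
      then obtain j where "m+1 = 3*2^j" by (auto simp: tw_def)
      then have "k+1 = 3*2^(Suc j)" using 2 by simp
      then show ?thesis unfolding tw_def by blast
    qed
  next
    case (3 m)
    then have "b (m+1) = 1" "b m = 1" using less.prems b_pos[of m] b_pos[of "m+1"] by (simp_all add: b_even)
    then have "pw m" "pw (m+1)" using b1_pw by blast+
    then obtain i j where ij: "m+1 = 2^j" "m+2 = 2^i" by (auto simp: pw_def)
    have "m = 0"
    proof (cases i)
      case 0 then show ?thesis using ij by simp
    next
      case (Suc i')
      then have "even (m+2)" using ij by simp
      then have "odd (m+1)" by simp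
      have "j = 0"
      proof (rule ccontr)
        assume "j \<noteq> 0"
        then have "even ((2::nat)^j)" by simp
        then show False using ij(1) \<open>odd (m+1)\<close> by metis
      qed
      then show ?thesis using ij by simp
    qed
    then have "k+1 = 3*2^0" using 3 by simp
    then show ?thesis unfolding tw_def by blast
  qed
qed

lemma pw_vals: "q+1 = 2^j \<Longrightarrow> v q = 0 \<and> v (2*q) = 0 \<and> v (2*q+2) = 0 \<and> b q = 1"
proof (induction j arbitrary: q)
  case 0
  then have q: "q = 0" by simp
  have "v 1 = 0" using v_odd0[of 0] by (simp add: v_zero)
  then have "v 2 = 0" using v_even0[of 0] by (simp add: v_zero b_zero numeral_2_eq_2)
  then show ?case using q by (simp add: v_zero b_zero numeral_2_eq_2)
next
  case (Suc j)
  then have "even (q+1)" by simp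
  then obtain q' where q: "q = 2*q'+1" by (metis even_Suc oddE Suc_eq_plus1)
  then have "q'+1 = 2^j" using Suc.prems by simp
  note IH = Suc.IH[OF this]
  have a: "v q = 0" "b q = 1" using IH q by (simp_all add: v_odd b_odd)
  have "v (2*q) = v (2*q'+1) + v (2*q') + int (b q') - 1"
    using v_even[of "2*q'"] q by (simp add: algebra_simps)
  then have c: "v (2*q) = 0" using IH by (simp add: v_odd)
  have "v (2*q+2) = v (2*q'+2) + v (2*q'+1) + int (b q') - 1"
    using v_even[of "2*q'+1"] q by (simp add: algebra_simps)
  then have d: "v (2*q+2) = 0" using IH by (simp add: v_odd)
  show ?case using a c d by simp
qed

lemma tw_vals: "q+1 = 3*2^j \<Longrightarrow> v q = 0 \<and> v (2*q) = int j \<and> v (2*q+2) = int j \<and> b q = 2"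
proof (induction j arbitrary: q)
  case 0
  then have q: "q = 2" by simp
  have v1: "v 1 = 0" using v_odd0[of 0] by (simp add: v_zero)
  have b1: "b 1 = 1" using b_odd_orig[of 0] by (simp add: b_zero)
  have v2: "v 2 = 0" using v_even0[of 0] v1 by (simp add: v_zero b_zero eval_nat_numeral One_nat_def)
  have v3: "v 3 = 0" using v_odd0[of 1] v1 by simp
  have v4: "v 4 = 0" using v_even0[of 1] v1 v2 by (simp add: b_zero eval_nat_numeral One_nat_def)
  have v6: "v 6 = 0" using v_even0[of 2] v3 v2 b1 by (simp add: eval_nat_numeral One_nat_def)
  have b2: "b 2 = 2" using b_even_orig[of 0] b1 by (simp add: b_zero eval_nat_numeral One_nat_def)
  show ?case using q v2 v4 v6 b2 by simp
next
  case (Suc j)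
  then have "even (q+1)" by simp
  then obtain q' where q: "q = 2*q'+1" by (metis even_Suc oddE Suc_eq_plus1)
  then have "q'+1 = 3*2^j" using Suc.prems by simp
  note IH = Suc.IH[OF this]
  have a: "v q = 0" "b q = 2" using IH q by (simp_all add: v_odd b_odd)
  have "v (2*q) = v (2*q'+1) + v (2*q') + int (b q') - 1"
    using v_even[of "2*q'"] q by (simp add: algebra_simps)
  then have c: "v (2*q) = int (Suc j)" using IH by (simp add: v_odd)
  have "v (2*q+2) = v (2*q'+2) + v (2*q'+1) + int (b q') - 1"
    using v_even[of "2*q'+1"] q by (simp add: algebra_simps)
  then have d: "v (2*q+2) = int (Suc j)" using IH by (simp add: v_odd)
  show ?case using a c d by simp
qed

theorem mainTheorem3:
  fixes n :: nat
  assumes "even n"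
  shows "v n = 1 \<longleftrightarrow> n \<in> {10, 12}"
proof (cases n rule: nat_cases3)
  case 1 then show ?thesis by (simp add: v_zero)
next
  case (2 m) then show ?thesis using assms by simp
next
  case (3 m)
  define k where "k = m div 2"
  have vn: "v n = v (m+1) + v m + int (b k) - 1" using 3 v_even k_def by simp
  have mk: "m = 2*k \<or> m = 2*k+1" using k_def by auto
  show ?thesis
  proof
    assume h: "v n = 1"
    then have "b k \<le> 2" using vn v_nonneg[of m] v_nonneg[of "m+1"] by simp
    then have "pw k \<or> tw k" by (rule b2_pw_tw)
    then show "n \<in> {10,12}"
    proof
      assume "pw k"
      then obtain j where "k+1 = 2^j" by (auto simp: pw_def)
      note P = pw_vals[OF this]
      have "v n = 0" using mk
      proof
        assume "m = 2*k" then show ?thesis using vn P v_odd[of k] by simp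
      next
        assume "m = 2*k+1" then show ?thesis using vn P v_odd[of k] by (simp add: algebra_simps)
      qed
      then show ?thesis using h by simp
    next
      assume "tw k"
      then obtain j where j: "k+1 = 3*2^j" by (auto simp: tw_def)
      note P = tw_vals[OF this]
      have "v n = int j + 1" using mk
      proof
        assume "m = 2*k" then show ?thesis using vn P v_odd[of k] by simp
      next
        assume "m = 2*k+1" then show ?thesis using vn P v_odd[of k] by (simp add: algebra_simps)
      qed
      then have "j = 0" using h by simp
      then have "k = 2" using j by simp
      then show ?thesis using mk 3 by auto
    qed
  next
    assume "n \<in> {10,12}"
    then have "m \<in> {4,5}" using 3 by auto
    then have k2: "k = 2" using k_def by auto
    then have P: "v k = 0 \<and> v (2*k) = 0 \<and> v (2*k+2) = 0 \<and> b k = 2" using tw_vals[of k 0] by simp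
    show "v n = 1" using \<open>m \<in> {4,5}\<close>
    proof
      assume "m = 4" then show ?thesis using vn P k2 v_odd[of 2] by simp
    next
      assume "m \<in> {5}" then show ?thesis using vn P k2 v_odd[of 2] by simp
    qed
  qed
qed

end
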